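(* Let $p\ge5$ be a prime and $n,k\in\mathbb{N}$ with $n>k$. Then \[ \sum_{j=1}^{p-1}\binom{np}{kp+j}^2\binom{2kp+2j}{kp+j}\binom{2np-2kp-2j}{np-kp-j}\equiv 8p^3B_{p-3}\,n(n-k)^2\binom{n}{k}^2\binom{2k}{k}\binom{2n-2k-2}{n-k-1}\pmod{p^4}. \]
   Context: The Bernoulli numbers $B_m$ are defined by $\frac{z}{e^z-1}=\sum_{m\ge0}B_m\frac{z^m}{m!}$. For rationals $a,b$, $a\equiv b\pmod{p^m}$ means $(a-b)/p^m$ is a rational number whose denominator is not divisible by $p$. *)

theory Defs
  imports Complex_Main "HOL-Computational_Algebra.Primes"
begin

text \<open>Bernoulli numbers with z/(e^z-1) = sum B_m z^m/m!, i.e. B_0 = 1 and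
  sum_{k<=m} (m+1 choose k) B_k = 0 for m >= 1 (so B_1 = -1/2).\<close>
fun bernoulli :: "nat \<Rightarrow> rat" where
  "bernoulli m = (if m = 0 then 1 else
     - (\<Sum>k\<in>{..<m}. of_nat ((m + 1) choose k) * bernoulli k) / of_nat (m + 1))"

declare bernoulli.simps [simp del]

definition rat_cong :: "rat \<Rightarrow> rat \<Rightarrow> nat \<Rightarrow> nat \<Rightarrow> bool" where
  "rat_cong a b p m \<longleftrightarrow>
     \<not> int p dvd snd (quotient_of ((a - b) / of_nat (p ^ m)))"

end

theory Submission
  imports Defs "HOL-Number_Theory.Number_Theory"
begin

definition pint :: "nat \<Rightarrow> rat \<Rightarrow> bool" where
  "pint p x \<longleftrightarrow> (\<exists>a b::int. \<not> int p dvd b \<and> x = of_int a / of_int b)"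

definition punit :: "nat \<Rightarrow> rat \<Rightarrow> bool" where
  "punit p x \<longleftrightarrow> (\<exists>a b::int. \<not> int p dvd a \<and> \<not> int p dvd b \<and> x = of_int a / of_int b)"

definition cg :: "nat \<Rightarrow> nat \<Rightarrow> rat \<Rightarrow> rat \<Rightarrow> bool" where
  "cg p k x y \<longleftrightarrow> pint p ((x - y) / of_nat (p ^ k))"

lemma rat_cong_iff:
  assumes "prime p"
  shows "rat_cong a b p m \<longleftrightarrow> cg p m a b"
proof -
  define x where "x = (a - b) / of_nat (p ^ m)"
  obtain c d where qd: "quotient_of x = (c, d)" by (cases "quotient_of x") auto
  have xcd: "x = of_int c / of_int d" using quotient_of_div[OF qd] .
  have d0: "d > 0" using quotient_of_denom_pos[OF qd] .
  have cop: "coprime c d" using quotient_of_coprime[OF qd] .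
  have "(\<not> int p dvd d) \<longleftrightarrow> pint p x"
  proof
    assume "\<not> int p dvd d" then show "pint p x" unfolding pint_def using xcd by blast
  next
    assume "pint p x"
    then obtain a' b' where ab: "\<not> int p dvd b'" "x = of_int a' / of_int b'" unfolding pint_def by blast
    have b0: "b' \<noteq> 0" using ab(1) by auto
    have "of_int c / of_int d = (of_int a' / of_int b' :: rat)" using ab xcd by simp
    then have "of_int (c * b') = (of_int (a' * d) :: rat)" using b0 d0
      by (simp add: field_simps)
    then have "c * b' = a' * d" by (simp only: of_int_eq_iff)
    then have "d dvd c * b'" by (metis dvd_triv_right)
    then have "d dvd b'" using cop by (meson coprime_commute coprime_dvd_mult_right_iff)
    then show "\<not> int p dvd d" using ab(1) dvd_trans by blast
  qed
  then show ?thesis unfolding rat_cong_def cg_def x_def[symmetric] qd by simp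
qed

context
  fixes p :: nat
  assumes pp: "prime p"
begin

lemma pprime_int: "prime (int p)" using pp by simp

lemma pint_int[simp]: "pint p (of_int a)"
  unfolding pint_def using pp
  by (rule_tac x=a in exI, rule_tac x=1 in exI) (auto simp: prime_nat_iff)

lemma pint_nat[simp]: "pint p (of_nat a)"
  using pint_int[of "int a"] by simp

lemma pint_numeral[simp]: "pint p (numeral a)"
  using pint_nat[of "numeral a"] by simp

lemma pint_0[simp]: "pint p 0" and pint_1[simp]: "pint p 1"
  using pint_nat[of 0] pint_nat[of 1] by auto

lemma pint_add[intro]: "pint p x \<Longrightarrow> pint p y \<Longrightarrow> pint p (x + y)"
proof -
  assume "pint p x" "pint p y"
  then obtain a b c d where h: "\<not> int p dvd b" "x = of_int a / of_int b"
    "\<not> int p dvd d" "y = of_int c / of_int d" unfolding pint_def by blast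
  have "b \<noteq> 0" "d \<noteq> 0" using h by auto
  then have "x + y = of_int (a*d + c*b) / of_int (b*d)" using h by (simp add: field_simps)
  moreover have "\<not> int p dvd b * d" using h pprime_int prime_dvd_mult_iff by blast
  ultimately show ?thesis unfolding pint_def by blast
qed

lemma pint_mult[intro]: "pint p x \<Longrightarrow> pint p y \<Longrightarrow> pint p (x * y)"
proof -
  assume "pint p x" "pint p y"
  then obtain a b c d where h: "\<not> int p dvd b" "x = of_int a / of_int b"
    "\<not> int p dvd d" "y = of_int c / of_int d" unfolding pint_def by blast
  have "x * y = of_int (a*c) / of_int (b*d)" using h by simp
  moreover have "\<not> int p dvd b * d" using h pprime_int prime_dvd_mult_iff by blast
  ultimately show ?thesis unfolding pint_def by blast
qed

lemma pint_uminus[intro]: "pint p x \<Longrightarrow> pint p (- x)"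
  using pint_mult[of "-1" x] pint_int[of "-1"] by simp

lemma pint_diff[intro]: "pint p x \<Longrightarrow> pint p y \<Longrightarrow> pint p (x - y)"
  using pint_add[of x "-y"] pint_uminus by simp

lemma pint_sum[intro]: "(\<And>i. i \<in> A \<Longrightarrow> pint p (f i)) \<Longrightarrow> pint p (sum f A)"
  by (induction A rule: infinite_finite_induct) auto

lemma pint_power[intro]: "pint p x \<Longrightarrow> pint p (x ^ n)"
  by (induction n) auto

lemma punit_pint: "punit p x \<Longrightarrow> pint p x"
  unfolding punit_def pint_def by blast

lemma punit_inv: "punit p x \<Longrightarrow> punit p (1 / x)"
proof -
  assume "punit p x"
  then obtain a b where h: "\<not> int p dvd a" "\<not> int p dvd b" "x = of_int a / of_int b"
    unfolding punit_def by blast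
  then have "1 / x = of_int b / of_int a" by simp
  then show ?thesis using h unfolding punit_def by blast
qed

lemma punit_inv_pint: "punit p x \<Longrightarrow> pint p (1 / x)"
  using punit_inv punit_pint by blast

lemma punit_mult: "punit p x \<Longrightarrow> punit p y \<Longrightarrow> punit p (x * y)"
proof -
  assume "punit p x" "punit p y"
  then obtain a b c d where h: "\<not> int p dvd a" "\<not> int p dvd b" "x = of_int a / of_int b"
    "\<not> int p dvd c" "\<not> int p dvd d" "y = of_int c / of_int d" unfolding punit_def by blast
  have "x * y = of_int (a*c) / of_int (b*d)" using h by simp
  moreover have "\<not> int p dvd b * d" "\<not> int p dvd a * c" using h pprime_int prime_dvd_mult_iff by blast+
  ultimately show ?thesis unfolding punit_def by blast
qed

lemma punit_int: "\<not> int p dvd a \<Longrightarrow> punit p (of_int a)"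
  unfolding punit_def using pp
  by (rule_tac x=a in exI, rule_tac x=1 in exI) (auto simp: prime_nat_iff)

lemma punit_nat: "\<not> p dvd a \<Longrightarrow> punit p (of_nat a)"
  using punit_int[of "int a"] by simp

lemma punit_neg1: "punit p (-1)"
  using punit_int[of "-1"] pp by (auto simp: prime_nat_iff)

lemma punit_1: "punit p 1"
proof -
  have "\<not> int p dvd 1" using pprime_int by (meson not_prime_unit)
  then show ?thesis using punit_int[of 1] by simp
qed

lemma punit_power: "punit p x \<Longrightarrow> punit p (x ^ n)"
  by (induction n) (auto intro: punit_mult simp: punit_1)

lemma punit_fact: "m < p \<Longrightarrow> punit p (fact m)"
  using punit_nat[of "fact m"] prime_dvd_fact_iff[OF pp, of m] by (simp add: of_nat_fact)

lemma punit_divide: "punit p x \<Longrightarrow> punit p y \<Longrightarrow> punit p (x / y)"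
  using punit_mult[of x "1/y"] punit_inv by simp

lemma pint_div_unit: "pint p x \<Longrightarrow> punit p y \<Longrightarrow> pint p (x / y)"
  using pint_mult[of x "1/y"] punit_inv_pint by simp

lemma cg_refl[simp]: "cg p k x x" by (simp add: cg_def)

lemma cg_sym: "cg p k x y \<Longrightarrow> cg p k y x"
  unfolding cg_def using pint_uminus[of "(x - y) / of_nat (p ^ k)"] by (simp add: minus_divide_left)

lemma cg_trans: "cg p k x y \<Longrightarrow> cg p k y z \<Longrightarrow> cg p k x z"
  unfolding cg_def using pint_add[of "(x - y) / of_nat (p ^ k)" "(y - z) / of_nat (p ^ k)"]
  by (simp add: add_divide_distrib[symmetric])

lemma cg_add: "cg p k x y \<Longrightarrow> cg p k u v \<Longrightarrow> cg p k (x + u) (y + v)"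
  unfolding cg_def using pint_add[of "(x - y) / of_nat (p ^ k)" "(u - v) / of_nat (p ^ k)"]
  by (simp add: add_divide_distrib[symmetric] algebra_simps)

lemma cg_uminus: "cg p k x y \<Longrightarrow> cg p k (- x) (- y)"
  unfolding cg_def using pint_uminus[of "(x - y) / of_nat (p ^ k)"]
  by (simp add: minus_divide_left algebra_simps)

lemma cg_diff: "cg p k x y \<Longrightarrow> cg p k u v \<Longrightarrow> cg p k (x - u) (y - v)"
  using cg_add[of k x y "-u" "-v"] cg_uminus by simp

lemma cg_mult: "cg p k x y \<Longrightarrow> cg p k u v \<Longrightarrow> pint p x \<Longrightarrow> pint p v \<Longrightarrow> cg p k (x * u) (y * v)"
proof -
  assume a: "cg p k x y" "cg p k u v" "pint p x" "pint p v"
  have e: "x * u - y * v = x * (u - v) + (x - y) * v" by (simp add: algebra_simps)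
  have "(x * u - y * v) / of_nat (p ^ k) = x * ((u - v) / of_nat (p ^ k)) + ((x - y) / of_nat (p ^ k)) * v"
    unfolding e by (simp add: add_divide_distrib)
  moreover have "pint p (x * ((u - v) / of_nat (p ^ k)) + ((x - y) / of_nat (p ^ k)) * v)"
    by (intro pint_add pint_mult) (use a in \<open>auto simp: cg_def\<close>)
  ultimately show ?thesis unfolding cg_def by simp
qed

lemma cg_mult_left: "cg p k u v \<Longrightarrow> pint p x \<Longrightarrow> cg p k (x * u) (x * v)"
proof -
  assume a: "cg p k u v" "pint p x"
  have e: "x * u - x * v = x * (u - v)" by (simp add: algebra_simps)
  have "(x * u - x * v) / of_nat (p ^ k) = x * ((u - v) / of_nat (p ^ k))"
    unfolding e by simp
  moreover have "pint p (x * ((u - v) / of_nat (p ^ k)))"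
    by (rule pint_mult) (use a in \<open>auto simp: cg_def\<close>)
  ultimately show ?thesis unfolding cg_def by metis
qed

lemma cg_sum: "(\<And>i. i \<in> A \<Longrightarrow> cg p k (f i) (g i)) \<Longrightarrow> cg p k (sum f A) (sum g A)"
  by (induction A rule: infinite_finite_induct) (auto intro: cg_add)

lemma cg_inverse: "cg p k x y \<Longrightarrow> punit p x \<Longrightarrow> punit p y \<Longrightarrow> cg p k (1 / x) (1 / y)"
proof -
  assume a: "cg p k x y" "punit p x" "punit p y"
  have "x \<noteq> 0" "y \<noteq> 0" using a(2,3) unfolding punit_def by auto
  then have "(1 / x - 1 / y) / of_nat (p ^ k) = (((y - x) / of_nat (p ^ k)) * (1/x) * (1/y))"
    by (simp add: field_simps)
  moreover have "pint p ((((y - x) / of_nat (p ^ k)) * (1/x) * (1/y)))"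
    by (intro pint_mult punit_inv_pint) (use a cg_sym[OF a(1)] in \<open>auto simp: cg_def\<close>)
  ultimately show ?thesis unfolding cg_def by simp
qed

lemma cg_int: "[a = b] (mod int (p ^ k)) \<Longrightarrow> cg p k (of_int a) (of_int b)"
proof -
  assume "[a = b] (mod int (p ^ k))"
  then obtain t where "a - b = int (p ^ k) * t" by (metis cong_iff_dvd_diff cong_sym dvdE)
  then have "(of_int a - of_int b) / of_nat (p ^ k) = (of_int t :: rat)"
    using pp by (simp add: field_simps prime_gt_0_nat flip: of_int_diff)
  then show ?thesis unfolding cg_def by simp
qed

lemma cg_scale: "cg p k x y \<Longrightarrow> cg p (k + l) (of_nat p ^ l * x) (of_nat p ^ l * y)"
proof -
  assume "cg p k x y"
  have "(of_nat p ^ l * x - of_nat p ^ l * y) / of_nat (p ^ (k + l)) = (x - y) / of_nat (p ^ k)"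
    using pp by (simp add: field_simps power_add prime_gt_0_nat)
  then show ?thesis using \<open>cg p k x y\<close> unfolding cg_def by simp
qed

lemma cg_0_iff: "cg p k x 0 \<longleftrightarrow> (\<exists>t. pint p t \<and> x = of_nat p ^ k * t)"
proof
  assume "cg p k x 0" then show "\<exists>t. pint p t \<and> x = of_nat p ^ k * t"
    unfolding cg_def using pp by (rule_tac x="x / of_nat (p^k)" in exI) (auto simp: prime_gt_0_nat)
next
  assume "\<exists>t. pint p t \<and> x = of_nat p ^ k * t"
  then show "cg p k x 0" unfolding cg_def using pp by (auto simp: prime_gt_0_nat)
qed

lemma cg_iff0: "cg p k x y \<longleftrightarrow> cg p k (x - y) 0"
  unfolding cg_def by simp

end

definition psum :: "nat \<Rightarrow> nat \<Rightarrow> nat" where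
  "psum e N = (\<Sum>j<N. j ^ e)"

lemma psum_rec: "N ^ (Suc e) = (\<Sum>i\<le>e. (Suc e choose i) * psum i N)"
proof (induction N)
  case 0
  then show ?case by (simp add: psum_def)
next
  case (Suc N)
  have b: "(N + 1) ^ Suc e = (\<Sum>i\<le>Suc e. (Suc e choose i) * N ^ i)"
    using binomial_ring[of N 1 "Suc e"] by simp
  have "(\<Sum>i\<le>e. (Suc e choose i) * psum i (Suc N))
      = (\<Sum>i\<le>e. (Suc e choose i) * psum i N) + (\<Sum>i\<le>e. (Suc e choose i) * N ^ i)"
    by (simp add: psum_def sum.distrib algebra_simps)
  also have "\<dots> = N ^ Suc e + (\<Sum>i\<le>e. (Suc e choose i) * N ^ i)" using Suc by simp
  also have "\<dots> = (\<Sum>i\<le>Suc e. (Suc e choose i) * N ^ i)" by simp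
  finally show ?case using b by simp
qed

lemma bernoulli_rec:
  assumes "m \<ge> 1"
  shows "of_nat (m + 1) * bernoulli m = - (\<Sum>k<m. of_nat ((m + 1) choose k) * bernoulli k)"
proof -
  have "bernoulli m = - (\<Sum>k\<in>{..<m}. of_nat ((m + 1) choose k) * bernoulli k) / of_nat (m + 1)"
    using assms by (subst bernoulli.simps) simp
  then show ?thesis by (simp add: field_simps)
qed

lemma bernoulli_0: "bernoulli 0 = 1" by (subst bernoulli.simps) simp

context
  fixes p :: nat
  assumes pp: "prime p"
begin

lemma p_gt0: "p > 0" using pp prime_gt_0_nat by blast

lemma bern_pint: "m + 2 \<le> p \<Longrightarrow> pint p (bernoulli m)"
proof (induction m rule: less_induct)
  case (less m)
  show ?case
  proof (cases "m = 0")
    case True then show ?thesis using pp by (simp add: bernoulli_0)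
  next
    case False
    have eq: "bernoulli m = (- (\<Sum>k<m. of_nat ((m + 1) choose k) * bernoulli k)) / of_nat (m + 1)"
      using bernoulli_rec[of m] False by (simp add: field_simps)
    have a: "pint p (- (\<Sum>k<m. of_nat ((m + 1) choose k) * bernoulli k))"
      using less pp by (intro pint_uminus pint_sum pint_mult) auto
    have u: "punit p (of_nat (m + 1))"
    proof (rule punit_nat[OF pp])
      show "\<not> p dvd m + 1" using less.prems by (auto dest: dvd_imp_le)
    qed
    show ?thesis unfolding eq by (rule pint_div_unit[OF pp a u])
  qed
qed

lemma cg_cancel: "cg p (Suc k) (of_nat p * x) (of_nat p * y) \<Longrightarrow> cg p k x y"
proof -
  assume "cg p (Suc k) (of_nat p * x) (of_nat p * y)"
  moreover have "(of_nat p * x - of_nat p * y) / of_nat (p ^ Suc k) = (x - y) / of_nat (p ^ k)"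
    using p_gt0 by (simp add: field_simps)
  ultimately show ?thesis unfolding cg_def by simp
qed

lemma psum_cong: "e + 2 \<le> p \<Longrightarrow> cg p 2 (of_nat (psum e p)) (of_nat p * bernoulli e)"
proof (induction e rule: less_induct)
  case (less e)
  show ?case
  proof (cases "e = 0")
    case True then show ?thesis by (simp add: psum_def bernoulli_0 pp)
  next
    case False
    have rec: "of_nat p ^ Suc e = (\<Sum>i\<le>e. of_nat (Suc e choose i) * of_nat (psum i p) :: rat)"
      using arg_cong[OF psum_rec[of p e], of "of_nat :: nat \<Rightarrow> rat"] by simp
    have split: "(\<Sum>i\<le>e. of_nat (Suc e choose i) * of_nat (psum i p) :: rat)
       = of_nat (Suc e) * of_nat (psum e p) + (\<Sum>i<e. of_nat (Suc e choose i) * of_nat (psum i p))"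
      by (simp add: lessThan_Suc_atMost[symmetric])
    have c1: "cg p 2 (\<Sum>i<e. of_nat (Suc e choose i) * of_nat (psum i p))
                     (\<Sum>i<e. of_nat (Suc e choose i) * (of_nat p * bernoulli i))"
      using less by (intro cg_sum[OF pp] cg_mult_left[OF pp]) (auto simp: pp)
    have c2: "cg p 2 (of_nat p ^ Suc e) 0"
    proof -
      have "of_nat p ^ Suc e = (of_nat p ^ 2 * of_nat p ^ (e - 1) :: rat)"
        using False by (simp add: power_add[symmetric])
      then show ?thesis using cg_0_iff[OF pp, of 2 "of_nat p ^ Suc e"] pp by auto
    qed
    have "of_nat (Suc e) * of_nat (psum e p) = of_nat p ^ Suc e - (\<Sum>i<e. of_nat (Suc e choose i) * of_nat (psum i p) :: rat)"
      using rec split by simp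
    moreover have "cg p 2 (of_nat p ^ Suc e - (\<Sum>i<e. of_nat (Suc e choose i) * of_nat (psum i p)))
        (0 - (\<Sum>i<e. of_nat (Suc e choose i) * (of_nat p * bernoulli i)))"
      using cg_diff[OF pp c2 c1] .
    moreover have "(0 - (\<Sum>i<e. of_nat (Suc e choose i) * (of_nat p * bernoulli i)))
         = of_nat (Suc e) * (of_nat p * bernoulli e)"
    proof -
      have h1: "(\<Sum>k<e. of_nat ((e + 1) choose k) * bernoulli k) = - (of_nat (e + 1) * bernoulli e)"
        using bernoulli_rec[of e] False by simp
      moreover have "(\<Sum>i<e. of_nat (Suc e choose i) * (of_nat p * bernoulli i))
          = of_nat p * (\<Sum>i<e. of_nat (Suc e choose i) * bernoulli i)"
        by (simp add: sum_distrib_left algebra_simps)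
      ultimately show ?thesis by (simp only: Suc_eq_plus1) (simp add: algebra_simps)
    qed
    ultimately have c3: "cg p 2 (of_nat (Suc e) * of_nat (psum e p)) (of_nat (Suc e) * (of_nat p * bernoulli e))"
      by simp
    have u: "punit p (of_nat (Suc e))"
    proof (rule punit_nat[OF pp])
      show "\<not> p dvd Suc e" using less.prems by (auto dest: dvd_imp_le)
    qed
    have "cg p 2 (1 / of_nat (Suc e) * (of_nat (Suc e) * of_nat (psum e p)))
                 (1 / of_nat (Suc e) * (of_nat (Suc e) * (of_nat p * bernoulli e)))"
      by (rule cg_mult_left[OF pp c3 punit_inv_pint[OF pp u]])
    then show ?thesis by simp
  qed
qed

end

lemma sum_split1:
  fixes f :: "nat \<Rightarrow> 'a::comm_monoid_add"
  assumes "p = 2 * h + 1"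
  shows "(\<Sum>j\<in>{1..2*h}. f j) = (\<Sum>j\<in>{1..h}. f j + f (p - j))"
proof -
  have "{1..2*h} = {1..h} \<union> {h+1..2*h}" by auto
  moreover have "sum f ({1..h} \<union> {h+1..2*h}) = sum f {1..h} + sum f {h+1..2*h}"
    by (rule sum.union_disjoint) auto
  ultimately have "(\<Sum>j\<in>{1..2*h}. f j) = (\<Sum>j\<in>{1..h}. f j) + (\<Sum>j\<in>{h+1..2*h}. f j)"
    by simp
  also have "(\<Sum>j\<in>{h+1..2*h}. f j) = (\<Sum>j\<in>{1..h}. f (p - j))"
  proof (rule sum.reindex_bij_witness[where i="\<lambda>j. p - j" and j="\<lambda>j. p - j"])
    fix a assume "a \<in> {h+1..2*h}" then show "p - (p - a) = a" "p - a \<in> {1..h}" "f (p - (p - a)) = f a" using assms by auto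
  next
    fix b assume "b \<in> {1..h}" then show "p - (p - b) = b" "p - b \<in> {h+1..2*h}" using assms by auto
  qed
  finally show ?thesis by (simp add: sum.distrib)
qed

lemma sum_split2:
  fixes f :: "nat \<Rightarrow> 'a::comm_monoid_add"
  assumes ph: "p = 2 * h + 1"
  shows "(\<Sum>j\<in>{1..2*h}. f j) = (\<Sum>j\<in>{1..h}. f (2 * j) + f (p - 2 * j))"
proof -
  define A where "A = {x\<in>{1..2*h}. even x}"
  define B where "B = {x\<in>{1..2*h}. odd x}"
  have "{1..2*h} = A \<union> B" unfolding A_def B_def by auto
  moreover have "sum f (A \<union> B) = sum f A + sum f B"
    by (rule sum.union_disjoint) (auto simp: A_def B_def)
  ultimately have "(\<Sum>j\<in>{1..2*h}. f j) = sum f A + sum f B" by simp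
  also have "sum f A = (\<Sum>j\<in>{1..h}. f (2 * j))"
  proof (rule sum.reindex_bij_witness[where i="\<lambda>j. 2 * j" and j="\<lambda>j. j div 2"])
    fix a assume "a \<in> A" then show "2 * (a div 2) = a" "a div 2 \<in> {1..h}" "f (2 * (a div 2)) = f a" unfolding A_def by auto
  next
    fix b assume "b \<in> {1..h}" then show "2 * b div 2 = b" "2 * b \<in> A" unfolding A_def by auto
  qed
  also have "sum f B = (\<Sum>j\<in>{1..h}. f (p - 2 * j))"
  proof (rule sum.reindex_bij_witness[where i="\<lambda>j. p - 2 * j" and j="\<lambda>j. (p - j) div 2"])
    fix a assume "a \<in> B"
    then have a: "1 \<le> a" "a \<le> 2 * h" "odd a" unfolding B_def by auto
    then obtain c where c: "a = 2 * c + 1" by (metis oddE)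
    have "p - a = 2 * (h - c)" using a c ph by simp
    then have e: "p - 2 * ((p - a) div 2) = a" using a c ph by auto
    then show "p - 2 * ((p - a) div 2) = a" "f (p - 2 * ((p - a) div 2)) = f a" by auto
    show "(p - a) div 2 \<in> {1..h}" using \<open>p - a = 2 * (h - c)\<close> a c ph by auto
  next
    fix b assume b: "b \<in> {1..h}"
    have "p - (p - 2 * b) = 2 * b" using b ph by auto
    then show "(p - (p - 2 * b)) div 2 = b" by simp
    show "p - 2 * b \<in> B" using b ph unfolding B_def by auto
  qed
  finally show ?thesis by (simp add: sum.distrib)
qed

lemma binom_sq: "\<exists>t. (a - q :: int) ^ Suc e = a ^ Suc e - of_nat (Suc e) * q * a ^ e + q^2 * t"
proof (induction e)
  case 0
  then show ?case by (rule_tac x=0 in exI) simp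
next
  case (Suc e)
  then obtain t where t: "(a - q :: int) ^ Suc e = a ^ Suc e - of_nat (Suc e) * q * a ^ e + q^2 * t" by blast
  have "(a - q) ^ Suc (Suc e) = (a - q) * (a ^ Suc e - of_nat (Suc e) * q * a ^ e + q^2 * t)"
    using t by simp
  also have "\<dots> = a ^ Suc (Suc e) - of_nat (Suc (Suc e)) * q * a ^ Suc e
      + q^2 * (of_nat (Suc e) * a ^ e + (a - q) * t)"
    by (simp add: algebra_simps power2_eq_square)
  finally show ?case by blast
qed

lemma binom_sq_cong:
  assumes "even e" "e \<ge> 2"
  shows "[(q - a :: int) ^ e = a ^ e - of_nat e * q * a ^ (e - 1)] (mod q^2)"
proof -
  obtain e' where e: "e = Suc e'" using assms by (cases e) auto
  obtain t where t: "(a - q :: int) ^ Suc e' = a ^ Suc e' - of_nat (Suc e') * q * a ^ e' + q^2 * t"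
    using binom_sq by blast
  have "(q - a) ^ e = (a - q) ^ e" using assms(1) by (metis minus_diff_eq power_minus_even)
  then have "(q - a) ^ e - (a ^ e - of_nat e * q * a ^ (e - 1)) = q^2 * t" using t e by simp
  then show ?thesis by (simp add: cong_iff_dvd_diff)
qed

lemma gen_sum_lin:
  fixes a b :: "nat \<Rightarrow> int"
  shows "(\<Sum>j\<in>A. K * a j + (K * a j - c * b j)) = 2 * K * sum a A - c * sum b A"
  by (induction A rule: infinite_finite_induct) (auto simp: algebra_simps)

context
  fixes p h :: nat
  assumes pp: "prime p" and p5: "p \<ge> 5" and ph: "p = 2 * h + 1"
begin

definition "e3 = p - 3"

lemma e3_even: "even e3" "e3 \<ge> 2" using ph p5 unfolding e3_def by auto

definition "SS = (\<Sum>j\<in>{1..2*h}. int j ^ e3)"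
definition "H2 = (\<Sum>j\<in>{1..h}. int j ^ e3)"
definition "H3 = (\<Sum>j\<in>{1..h}. int j ^ (e3 - 1))"

lemma e3_val: "e3 = p - 3" unfolding e3_def ..
lemma SS_val: "SS = (\<Sum>j\<in>{1..2*h}. int j ^ e3)" unfolding SS_def ..
lemma H3_val: "H3 = (\<Sum>j\<in>{1..h}. int j ^ (e3 - 1))" unfolding H3_def ..

lemma cong_I: "[SS = 2 * H2 - of_nat e3 * int p * H3] (mod (int p)^2)"
proof -
  have "SS = (\<Sum>j\<in>{1..h}. int j ^ e3 + int (p - j) ^ e3)"
    unfolding SS_def by (rule sum_split1[OF ph, where f="\<lambda>j. int j ^ e3"])
  also have "\<dots> = (\<Sum>j\<in>{1..h}. int j ^ e3 + (int p - int j) ^ e3)"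
    by (rule sum.cong) (use ph in auto)
  also have "[\<dots> = (\<Sum>j\<in>{1..h}. 1 * int j ^ e3 + (1 * int j ^ e3 - (of_nat e3 * int p) * int j ^ (e3 - 1)))] (mod (int p)^2)"
  proof (rule cong_sum)
    fix j assume "j \<in> {1..h}"
    have "[(int p - int j) ^ e3 = int j ^ e3 - of_nat e3 * int p * int j ^ (e3 - 1)] (mod (int p)^2)"
      by (rule binom_sq_cong) (use e3_even in auto)
    from cong_add[OF cong_refl[of "int j ^ e3"] this]
    show "[int j ^ e3 + (int p - int j) ^ e3 = 1 * int j ^ e3 + (1 * int j ^ e3 - (of_nat e3 * int p) * int j ^ (e3 - 1))] (mod (int p)^2)"
      by (simp only: mult_1)
  qed
  also have "(\<Sum>j\<in>{1..h}. 1 * int j ^ e3 + (1 * int j ^ e3 - (of_nat e3 * int p) * int j ^ (e3 - 1)))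
      = 2 * 1 * H2 - (of_nat e3 * int p) * H3"
    unfolding H2_def H3_def by (rule gen_sum_lin)
  finally show ?thesis by simp
qed

lemma cong_II: "[SS = 2 * 2^e3 * H2 - (of_nat e3 * int p * 2^(e3-1)) * H3] (mod (int p)^2)"
proof -
  have c0: "SS = (\<Sum>j\<in>{1..h}. int (2 * j) ^ e3 + int (p - 2 * j) ^ e3)"
    unfolding SS_def by (rule sum_split2[OF ph, where f="\<lambda>j. int j ^ e3"])
  have c1: "(\<Sum>j\<in>{1..h}. int (2 * j) ^ e3 + int (p - 2 * j) ^ e3) = (\<Sum>j\<in>{1..h}. int (2 * j) ^ e3 + (int p - int (2 * j)) ^ e3)"
    by (rule sum.cong) (use ph in auto)
  have c2: "[(\<Sum>j\<in>{1..h}. int (2 * j) ^ e3 + (int p - int (2 * j)) ^ e3) = (\<Sum>j\<in>{1..h}. 2^e3 * int j ^ e3 + (2^e3 * int j ^ e3 - (of_nat e3 * int p * 2^(e3-1)) * int j ^ (e3 - 1)))] (mod (int p)^2)"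
  proof (rule cong_sum)
    fix j assume "j \<in> {1..h}"
    have "[(int p - int (2 * j)) ^ e3 = int (2 * j) ^ e3 - of_nat e3 * int p * int (2 * j) ^ (e3 - 1)] (mod (int p)^2)"
      by (rule binom_sq_cong) (use e3_even in auto)
    then have A: "[int (2 * j) ^ e3 + (int p - int (2 * j)) ^ e3 = int (2 * j) ^ e3 + (int (2 * j) ^ e3 - of_nat e3 * int p * int (2 * j) ^ (e3 - 1))] (mod (int p)^2)"
      by (rule cong_add[OF cong_refl])
    have B: "int (2 * j) ^ e3 + (int (2 * j) ^ e3 - of_nat e3 * int p * int (2 * j) ^ (e3 - 1))
      = 2^e3 * int j ^ e3 + (2^e3 * int j ^ e3 - (of_nat e3 * int p * 2^(e3-1)) * int j ^ (e3 - 1))"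
      by (simp add: power_mult_distrib algebra_simps)
    from A show "[int (2 * j) ^ e3 + (int p - int (2 * j)) ^ e3 = 2^e3 * int j ^ e3 + (2^e3 * int j ^ e3 - (of_nat e3 * int p * 2^(e3-1)) * int j ^ (e3 - 1))] (mod (int p)^2)"
      unfolding B .
  qed
  have c3: "(\<Sum>j\<in>{1..h}. 2^e3 * int j ^ e3 + (2^e3 * int j ^ e3 - (of_nat e3 * int p * 2^(e3-1)) * int j ^ (e3 - 1))) = 2 * 2^e3 * H2 - (of_nat e3 * int p * 2^(e3-1)) * H3"
    unfolding H2_def H3_def by (rule gen_sum_lin[where K="2^e3" and a="\<lambda>j. int j ^ e3" and c="of_nat e3 * int p * 2^(e3-1)" and b="\<lambda>j. int j ^ (e3 - 1)"])
  show ?thesis unfolding c0 c1 c3[symmetric] by (rule c2)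
qed

lemma cong_III: "[(2^e3 - 1) * SS = - (of_nat e3 * 2^(e3-1) * int p * H3)] (mod (int p)^2)"
proof -
  have "[2^e3 * SS - SS = 2^e3 * (2 * H2 - of_nat e3 * int p * H3) - (2 * 2^e3 * H2 - (of_nat e3 * int p * 2^(e3-1)) * H3)] (mod (int p)^2)"
    by (intro cong_diff cong_mult cong_refl cong_I cong_II)
  moreover have "(2::int)^e3 = 2 * 2^(e3-1)" using e3_even by (cases e3) auto
  moreover have "2^e3 * (2 * H2 - of_nat e3 * int p * H3) - (2 * 2^e3 * H2 - (of_nat e3 * int p * 2^(e3-1)) * H3)
     = - (of_nat e3 * 2^(e3-1) * int p * H3)" using calculation(2)
    by (simp add: algebra_simps)
  ultimately show ?thesis by (simp add: algebra_simps)
qed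

end

context
  fixes p h :: nat
  assumes pp: "prime p" and p5: "p \<ge> 5" and ph: "p = 2 * h + 1"
begin

lemma psum_SS: "rat_of_nat (psum (e3 p) p) = of_int (SS p h)"
proof -
  note e3v = e3_val[OF pp p5 ph]
  have e: "e3 p \<ge> 1" using p5 unfolding e3v by simp
  have "{..<p} = insert 0 {1..2*h}" using ph by auto
  then have "psum (e3 p) p = (\<Sum>j\<in>{1..2*h}. j ^ e3 p)"
    unfolding psum_def using e by (simp add: sum.insert)
  then show ?thesis unfolding SS_val[OF pp p5 ph] by simp
qed

lemma bern_H3: "cg p 1 (8 * bernoulli (p - 3)) (- 4 * of_int (H3 p h))"
proof -
  let ?B = "bernoulli (p - 3)"
  let ?e = "e3 p"
  let ?H = "rat_of_int (H3 p h)"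
  have e3: "?e = p - 3" by (rule e3_val[OF pp p5 ph])
  have Bp: "pint p ?B" using bern_pint[OF pp, of "p - 3"] p5 by simp
  have c1: "cg p 2 (of_int (SS p h)) (of_nat p * ?B)"
    using psum_cong[OF pp, of "p - 3"] p5 psum_SS e3 by simp
  have c2: "cg p 2 (of_int ((2 ^ ?e - 1) * SS p h)) (of_int (- (of_nat ?e * 2 ^ (?e - 1) * int p * H3 p h)))"
    by (rule cg_int[OF pp]) (use cong_III[OF pp p5 ph] in \<open>simp add: of_nat_power\<close>)
  have c3: "cg p 2 ((2 ^ ?e - 1) * of_int (SS p h)) ((2 ^ ?e - 1) * (of_nat p * ?B))"
    by (rule cg_mult_left[OF pp c1]) (intro pint_diff[OF pp] pint_power[OF pp]; simp add: pp)
  have c4: "cg p 2 (of_nat p * ((2 ^ ?e - 1) * ?B)) (of_nat p * (- (of_nat ?e * 2 ^ (?e - 1) * ?H)))"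
  proof -
    have "cg p 2 ((2 ^ ?e - 1) * (of_nat p * ?B)) (of_int (- (of_nat ?e * 2 ^ (?e - 1) * int p * H3 p h)))"
      using cg_trans[OF pp cg_sym[OF pp c3]] c2 by simp
    moreover have "(2 ^ ?e - 1) * (of_nat p * ?B) = of_nat p * ((2 ^ ?e - 1) * ?B)" by simp
    moreover have "(of_int (- (of_nat ?e * 2 ^ (?e - 1) * int p * H3 p h)) :: rat) = of_nat p * (- (of_nat ?e * 2 ^ (?e - 1) * ?H))"
      by simp
    ultimately show ?thesis by (simp add: mult_ac)
  qed
  have c5: "cg p 1 ((2 ^ ?e - 1) * ?B) (- (of_nat ?e * 2 ^ (?e - 1) * ?H))"
  proof -
    have "cg p (Suc 1) (of_nat p * ((2 ^ ?e - 1) * ?B)) (of_nat p * (- (of_nat ?e * 2 ^ (?e - 1) * ?H)))"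
      using c4 by (simp only: Suc_1)
    then show ?thesis by (rule cg_cancel[OF pp])
  qed
  have c6: "cg p 1 (8 * ((2 ^ ?e - 1) * ?B)) (8 * (- (of_nat ?e * 2 ^ (?e - 1) * ?H)))"
    by (rule cg_mult_left[OF pp c5]) (simp add: pp)
  have ferm: "[2 ^ (p - 1) = 1] (mod int p)"
  proof -
    have "\<not> p dvd 2" using p5 by (auto dest: dvd_imp_le)
    then have "[2 ^ (p - 1) = (1::nat)] (mod p)" using fermat_theorem[OF pp] by blast
    then show ?thesis by (metis cong_int_iff of_nat_1 of_nat_numeral of_nat_power)
  qed
  have pe1: "p - 1 = ?e + 2" using p5 e3 by simp
  have pe2: "p - 1 = 3 + (?e - 1)" using p5 e3 by simp
  have i1: "[8 * (2 ^ ?e - 1) = (-6::int)] (mod int p)"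
  proof -
    have "[2 * (2 ^ (p - 1)) - 8 = 2 * 1 - (8::int)] (mod int p)"
      by (intro cong_diff cong_mult cong_refl ferm)
    moreover have "2 * (2 ^ (p - 1)) - 8 = 8 * (2 ^ ?e - (1::int))"
      unfolding pe1 by (simp add: power_add)
    ultimately show ?thesis by simp
  qed
  have i2: "[8 * (of_nat ?e * 2 ^ (?e - 1)) = (-3::int)] (mod int p)"
  proof -
    have "[int ?e * 2 ^ (p - 1) = (int p - 3) * 1] (mod int p)"
      by (intro cong_mult ferm) (use p5 e3 in \<open>simp add: of_nat_diff\<close>)
    moreover have "[(int p - 3) * 1 = - 3] (mod int p)"
      by (simp add: cong_iff_dvd_diff)
    moreover have "int ?e * 2 ^ (p - 1) = 8 * (of_nat ?e * 2 ^ (?e - 1))"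
      unfolding pe2 by (simp add: power_add)
    ultimately show ?thesis using cong_trans by metis
  qed
  have c7: "cg p 1 (8 * ((2 ^ ?e - 1) * ?B)) (-6 * ?B)"
  proof -
    have "cg p 1 (of_int (8 * (2 ^ ?e - 1))) (of_int (-6))"
      by (rule cg_int[OF pp]) (use i1 in simp)
    then have "cg p 1 (of_int (8 * (2 ^ ?e - 1)) * ?B) (of_int (-6) * ?B)"
      by (rule cg_mult[OF pp _ cg_refl[OF pp]]) (rule pint_int[OF pp], rule Bp)
    then show ?thesis by (simp add: algebra_simps)
  qed
  have c8: "cg p 1 (8 * (- (of_nat ?e * 2 ^ (?e - 1) * ?H))) (3 * ?H)"
  proof -
    have "cg p 1 (of_int (8 * (of_nat ?e * 2 ^ (?e - 1)))) (of_int (-3))"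
      by (rule cg_int[OF pp]) (use i2 in simp)
    then have "cg p 1 (- (of_int (8 * (of_nat ?e * 2 ^ (?e - 1))) * ?H)) (- (of_int (-3) * ?H))"
      by (intro cg_uminus[OF pp] cg_mult[OF pp _ cg_refl[OF pp]] pint_int[OF pp])
    then show ?thesis by (simp add: mult.assoc)
  qed
  have c9: "cg p 1 (-6 * ?B) (3 * ?H)"
    using cg_trans[OF pp cg_sym[OF pp c7] cg_trans[OF pp c6 c8]] .
  have u3: "punit p 3"
  proof -
    have "\<not> p dvd 3" using p5 by (auto dest: dvd_imp_le)
    then show ?thesis using punit_nat[OF pp, of 3] by simp
  qed
  have "cg p 1 ((-4 / 3) * (-6 * ?B)) ((-4 / 3) * (3 * ?H))"
  proof (rule cg_mult_left[OF pp c9])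
    have "pint p (- 4 * (1 / 3))" using punit_inv_pint[OF pp u3] pp by (intro pint_mult) auto
    then show "pint p (- 4 / 3)" by simp
  qed
  then show ?thesis by simp
qed

end

definition Rp :: "nat \<Rightarrow> nat \<Rightarrow> nat" where
  "Rp p N = prod id {i\<in>{1..N}. \<not> p dvd i}"

lemma Rp_0: "Rp p 0 = 1" by (simp add: Rp_def)

lemma Rp_Suc: "Rp p (Suc N) = (if p dvd Suc N then Rp p N else Suc N * Rp p N)"
proof -
  have "{i\<in>{1..Suc N}. \<not> p dvd i} = (if p dvd Suc N then {i\<in>{1..N}. \<not> p dvd i} else insert (Suc N) {i\<in>{1..N}. \<not> p dvd i})"
    by (auto simp: le_Suc_eq)
  then show ?thesis unfolding Rp_def by simp
qed

lemma fact_decomp: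
  assumes "p > 0"
  shows "fact N = p ^ (N div p) * fact (N div p) * Rp p N"
proof (induction N)
  case 0 then show ?case by (simp add: Rp_0)
next
  case (Suc N)
  show ?case
  proof (cases "p dvd Suc N")
    case True
    then have m: "Suc N mod p = 0" by simp
    then have d: "Suc N div p = Suc (N div p)" by (simp add: div_Suc)
    have e: "Suc N = p * Suc (N div p)" using m d by (metis div_mult_mod_eq add_0_right mult.commute)
    have "fact (Suc N) = Suc N * (fact N :: nat)" by simp
    also have "\<dots> = p * Suc (N div p) * (p ^ (N div p) * fact (N div p) * Rp p N)"
      using Suc e by simp
    also have "\<dots> = p ^ (Suc N div p) * fact (Suc N div p) * Rp p (Suc N)"
      using True d by (simp add: Rp_Suc algebra_simps)
    finally show ?thesis .
  next
    case False
    then have d: "Suc N div p = N div p" by (simp add: div_Suc dvd_eq_mod_eq_0)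
    have "fact (Suc N) = Suc N * (fact N :: nat)" by simp
    also have "\<dots> = p ^ (Suc N div p) * fact (Suc N div p) * Rp p (Suc N)"
      using Suc False d by (simp add: Rp_Suc algebra_simps)
    finally show ?thesis .
  qed
qed

context
  fixes p :: nat
  assumes pp: "prime p"
begin

lemma pgt0: "p > 0" using pp prime_gt_0_nat by blast

lemma R_cong: "[int (Rp p N) = (-1) ^ (N div p) * fact (N mod p)] (mod int p)"
proof (induction N)
  case 0 then show ?case by (simp add: Rp_0)
next
  case (Suc N)
  show ?case
  proof (cases "p dvd Suc N")
    case True
    then have m: "Suc N mod p = 0" by simp
    then have d: "Suc N div p = Suc (N div p)" by (simp add: div_Suc)
    have nm: "N mod p = p - 1" using m by (metis mod_Suc diff_Suc_1 nat.distinct(1))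
    have "[int (Rp p (Suc N)) = (-1) ^ (N div p) * fact (p - 1)] (mod int p)"
      using Suc True nm by (simp add: Rp_Suc)
    also have "[(-1) ^ (N div p) * fact (p - 1) = (-1) ^ (N div p) * (-1::int)] (mod int p)"
      by (rule cong_mult[OF cong_refl]) (use wilson_theorem[OF pp] in simp)
    also have "(-1) ^ (N div p) * (-1::int) = (-1) ^ (Suc N div p) * fact (Suc N mod p)"
      using m d by simp
    finally show ?thesis .
  next
    case False
    then have d: "Suc N div p = N div p" by (simp add: div_Suc dvd_eq_mod_eq_0)
    have m: "Suc N mod p = Suc (N mod p)" using False by (metis mod_Suc dvd_eq_mod_eq_0)
    have "Rp p (Suc N) = Suc N * Rp p N" using False by (simp add: Rp_Suc)
    then have "int (Rp p (Suc N)) = int (Suc N) * int (Rp p N)" by (simp only: of_nat_mult)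
    also have "[\<dots> = int (Suc (N mod p)) * ((-1) ^ (N div p) * fact (N mod p))] (mod int p)"
    proof (rule cong_mult[OF _ Suc])
      have "[Suc N = Suc (N mod p)] (mod p)" by (simp add: cong_def mod_Suc_eq)
      then show "[int (Suc N) = int (Suc (N mod p))] (mod int p)" by (simp only: cong_int_iff)
    qed
    also have "int (Suc (N mod p)) * ((-1) ^ (N div p) * fact (N mod p)) = (-1) ^ (Suc N div p) * fact (Suc N mod p)"
      using d m by (simp add: algebra_simps)
    finally show ?thesis .
  qed
qed

lemma Rp_not_dvd: "\<not> p dvd Rp p N"
proof -
  have "finite {i\<in>{1..N}. \<not> p dvd i}" by simp
  then show ?thesis unfolding Rp_def by (subst prime_dvd_prod_iff[OF _ pp]) auto
qed

definition rho :: "nat \<Rightarrow> nat \<Rightarrow> rat" where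
  "rho q r = (-1) ^ q * fact r"

lemma punit_rho: "r < p \<Longrightarrow> punit p (rho q r)"
  unfolding rho_def by (intro punit_mult[OF pp] punit_power[OF pp] punit_neg1[OF pp] punit_fact[OF pp])

lemma cg_pint: "cg p k x y \<Longrightarrow> pint p y \<Longrightarrow> pint p x"
proof -
  assume a: "cg p k x y" "pint p y"
  have "x = y + of_nat (p ^ k) * ((x - y) / of_nat (p ^ k))" using pgt0 by simp
  moreover have "pint p (y + of_nat (p ^ k) * ((x - y) / of_nat (p ^ k)))"
    using a unfolding cg_def by (intro pint_add[OF pp] pint_mult[OF pp] pint_nat[OF pp])
  ultimately show ?thesis by simp
qed

lemma cg_mult2: "cg p k x y \<Longrightarrow> cg p k u v \<Longrightarrow> pint p y \<Longrightarrow> pint p v \<Longrightarrow> cg p k (x * u) (y * v)"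
  using cg_mult[OF pp] cg_pint by blast

lemma Rp_cg: "N = q * p + r \<Longrightarrow> r < p \<Longrightarrow> cg p 1 (of_nat (Rp p N)) (rho q r)"
proof -
  assume N: "N = q * p + r" "r < p"
  have "N div p = q" "N mod p = r" using N pgt0 by auto
  then have "[int (Rp p N) = (-1) ^ q * fact r] (mod int (p ^ 1))" using R_cong[of N] by simp
  from cg_int[OF pp this] show ?thesis unfolding rho_def by simp
qed

lemma punit_Rp: "punit p (of_nat (Rp p N))"
  using punit_nat[OF pp] Rp_not_dvd by blast

lemma binom_exact:
  assumes "a = b + c" and "a div p = b div p + c div p + e"
  shows "(of_nat (a choose b) :: rat) = of_nat p ^ e * (fact (a div p) / (fact (b div p) * fact (c div p)))
      * (of_nat (Rp p a) / (of_nat (Rp p b) * of_nat (Rp p c)))"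
proof -
  have "fact b * fact c * (a choose b) = (fact a :: nat)"
    using binomial_fact_lemma[of b a] assms(1) by simp
  then have "(fact b * fact c * of_nat (a choose b) :: rat) = fact a"
    by (metis of_nat_fact of_nat_mult)
  moreover have "(fact a :: rat) = of_nat p ^ (a div p) * fact (a div p) * of_nat (Rp p a)"
    using arg_cong[OF fact_decomp[OF pgt0, of a], of "of_nat :: nat \<Rightarrow> rat"] by (simp add: of_nat_fact)
  moreover have "(fact b :: rat) = of_nat p ^ (b div p) * fact (b div p) * of_nat (Rp p b)"
    using arg_cong[OF fact_decomp[OF pgt0, of b], of "of_nat :: nat \<Rightarrow> rat"] by (simp add: of_nat_fact)
  moreover have "(fact c :: rat) = of_nat p ^ (c div p) * fact (c div p) * of_nat (Rp p c)"
    using arg_cong[OF fact_decomp[OF pgt0, of c], of "of_nat :: nat \<Rightarrow> rat"] by (simp add: of_nat_fact)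
  moreover have "Rp p b \<noteq> 0" "Rp p c \<noteq> 0" using Rp_not_dvd by (metis dvd_0_right)+
  moreover have "p \<noteq> 0" using pgt0 by simp
  ultimately show ?thesis using assms(2)
    by (simp add: field_simps power_add)
qed

lemma fact_quot_pint:
  assumes "qb + qc \<le> qa"
  shows "pint p (fact qa / (fact qb * fact qc))"
proof -
  have "fact qb * fact qc * ((qb + qc) choose qb) = (fact (qb + qc) :: nat)"
    using binomial_fact_lemma[of qb "qb + qc"] by simp
  then have "fact qb * fact qc dvd (fact (qb + qc) :: nat)" by (metis dvd_triv_left)
  also have "fact (qb + qc) dvd (fact qa :: nat)" using assms by (rule fact_dvd)
  finally obtain t where t: "fact qa = fact qb * fact qc * (t :: nat)" by (auto elim: dvdE)
  have "(fact qa :: rat) = fact qb * fact qc * of_nat t"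
    using arg_cong[OF t, of "of_nat :: nat \<Rightarrow> rat"] by simp
  then have "(fact qa :: rat) / (fact qb * fact qc) = of_nat t" by simp
  then show ?thesis using pint_nat[OF pp] by simp
qed

lemma binom_cg:
  assumes "a = qa * p + ra" "b = qb * p + rb" "c = qc * p + rc" "a = b + c"
    "ra < p" "rb < p" "rc < p" "qa = qb + qc + e"
  shows "cg p 1 (of_nat (a choose b) / of_nat p ^ e)
     ((fact qa / (fact qb * fact qc)) * (rho qa ra / (rho qb rb * rho qc rc)))"
proof -
  have dv: "a div p = qa" "b div p = qb" "c div p = qc" using assms pgt0 by auto
  have ex: "(of_nat (a choose b) :: rat) / of_nat p ^ e = (fact qa / (fact qb * fact qc))
      * (of_nat (Rp p a) / (of_nat (Rp p b) * of_nat (Rp p c)))"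
    using binom_exact[OF assms(4)] dv assms(8) pgt0 by simp
  have ca: "cg p 1 (of_nat (Rp p a)) (rho qa ra)" by (rule Rp_cg) (use assms in auto)
  have cb: "cg p 1 (of_nat (Rp p b)) (rho qb rb)" by (rule Rp_cg) (use assms in auto)
  have cc: "cg p 1 (of_nat (Rp p c)) (rho qc rc)" by (rule Rp_cg) (use assms in auto)
  have cbc: "cg p 1 (of_nat (Rp p b) * of_nat (Rp p c)) (rho qb rb * rho qc rc)"
    by (rule cg_mult2[OF cb cc]) (use punit_rho assms punit_pint[OF pp] in auto)
  have ubc: "punit p (rho qb rb * rho qc rc)" using punit_rho assms punit_mult[OF pp] by auto
  have ubc': "punit p (of_nat (Rp p b) * of_nat (Rp p c))" using punit_Rp punit_mult[OF pp] by auto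
  have inv: "cg p 1 (1 / (of_nat (Rp p b) * of_nat (Rp p c))) (1 / (rho qb rb * rho qc rc))"
    by (rule cg_inverse[OF pp cbc ubc' ubc])
  have "cg p 1 (of_nat (Rp p a) * (1 / (of_nat (Rp p b) * of_nat (Rp p c)))) (rho qa ra * (1 / (rho qb rb * rho qc rc)))"
    by (rule cg_mult2[OF ca inv]) (use punit_rho assms punit_pint[OF pp] punit_inv_pint[OF pp ubc] in auto)
  then have "cg p 1 ((fact qa / (fact qb * fact qc)) * (of_nat (Rp p a) * (1 / (of_nat (Rp p b) * of_nat (Rp p c)))))
       ((fact qa / (fact qb * fact qc)) * (rho qa ra * (1 / (rho qb rb * rho qc rc))))"
    by (rule cg_mult_left[OF pp]) (rule fact_quot_pint, use assms in simp)
  then show ?thesis unfolding ex by simp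
qed

end

context
  fixes p :: nat
  assumes pp: "prime p"
begin

lemma binom_cg_full:
  assumes "a = qa * p + ra" "b = qb * p + rb" "a - b = qc * p + rc" "b \<le> a"
    "ra < p" "rb < p" "rc < p" "qa = qb + qc + e"
  shows "cg p 1 (of_nat (a choose b) / of_nat p ^ e)
     ((fact qa / (fact qb * fact qc)) * (rho qa ra / (rho qb rb * rho qc rc)))"
   and "pint p ((fact qa / (fact qb * fact qc)) * (rho qa ra / (rho qb rb * rho qc rc)))"
proof -
  show "cg p 1 (of_nat (a choose b) / of_nat p ^ e)
     ((fact qa / (fact qb * fact qc)) * (rho qa ra / (rho qb rb * rho qc rc)))"
    by (rule binom_cg[OF pp assms(1,2,3)]) (use assms in auto)
  have "punit p (rho qa ra / (rho qb rb * rho qc rc))"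
    using assms by (intro punit_divide[OF pp] punit_mult[OF pp] punit_rho[OF pp])
  then show "pint p ((fact qa / (fact qb * fact qc)) * (rho qa ra / (rho qb rb * rho qc rc)))"
    using assms by (intro pint_mult[OF pp] fact_quot_pint[OF pp] punit_pint[OF pp]) auto
qed

lemma fact_pair_cong:
  "1 \<le> j \<Longrightarrow> j \<le> p \<Longrightarrow> [fact (p - j) * fact (j - 1) = ((-1) ^ j :: int)] (mod int p)"
proof (induction j)
  case 0
  then show ?case by simp
next
  case (Suc j)
  show ?case
  proof (cases "j = 0")
    case True
    then show ?thesis using wilson_theorem[OF pp] by simp
  next
    case False
    then have IH: "[fact (p - j) * fact (j - 1) = ((-1) ^ j :: int)] (mod int p)"
      using Suc by simp
    define q where "q = p - Suc j"
    have pj: "p - j = Suc q" using Suc.prems unfolding q_def by simp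
    have psj: "int p = int (Suc q) + int j" using Suc.prems unfolding q_def by simp
    have f1: "(fact (p - j) :: int) = int (Suc q) * fact q" unfolding pj by simp
    have j1: "j = Suc (j - 1)" using False by simp
    have fj: "(fact j :: int) = int j * fact (j - 1)" by (subst j1) (simp del: of_nat_Suc, use False in simp)
    have "int p dvd (fact (p - j) * fact (j - 1) - (-1) ^ j)" using IH by (simp add: cong_iff_dvd_diff)
    moreover have "int p dvd int p * (fact q * fact (j - 1))" by simp
    moreover have "fact q * fact j - (-1) ^ Suc j = int p * (fact q * fact (j - 1)) - (fact (p - j) * fact (j - 1) - (-1) ^ j :: int)"
      unfolding f1 fj psj by (simp add: algebra_simps)
    ultimately have "int p dvd (fact q * fact j - (-1) ^ Suc j)" by (metis dvd_diff)
    then show ?thesis unfolding q_def by (simp add: cong_iff_dvd_diff)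
  qed
qed

end

lemma abstract_id:
  fixes sk sm sn K M G H A' D' j Fn F2k F2k1 F2m F2m1 :: rat
  assumes "sk^2 = 1" "sm^2 = 1" "sn^2 = 1" "K \<noteq> 0" "M \<noteq> 0" "G \<noteq> 0" "H \<noteq> 0" "A' \<noteq> 0" "D' \<noteq> 0" "j \<noteq> 0"
  shows "(Fn/(K*M) * (sn/((sk*(j*G))*(sm*A'))))^2 * (F2k/(K*K) * ((2*j*H)/((sk*(j*G))*(sk*(j*G))))) * (F2m1/(M*M) * ((-D')/((sm*A')*(sm*A'))))
 + (Fn/(K*M) * (sn/((sk*A')*(sm*(j*G)))))^2 * (F2k1/(K*K)*((-D')/((sk*A')*(sk*A')))) * (F2m/(M*M) * ((2*j*H)/((sm*(j*G))*(sm*(j*G)))))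
 = -(Fn^2 * (F2k * F2m1 + F2k1 * F2m)/(K^4 * M^4)) * (2 * (D' * H) / (j^3 * (A' * G)^4))"
proof -
  have sk0: "sk \<noteq> 0" "sm \<noteq> 0" using assms(1,2) by auto
  have hk: "\<And>X. sk * (sk * X) = X" "\<And>X. sm * (sm * X) = X" using assms(1,2)
    by (metis mult.assoc mult_1 power2_eq_square)+
  show ?thesis using assms sk0 by (simp add: field_simps) (simp add: hk algebra_simps power2_eq_square power3_eq_cube power4_eq_xxxx)
qed

lemma abstract_id2:
  fixes sk sm sn K M G H A' D' j Fn F2k F2k1 F2m F2m1 :: rat
  assumes "sk^2 = 1" "sm^2 = 1" "sn^2 = 1" "K \<noteq> 0" "M \<noteq> 0" "G \<noteq> 0" "H \<noteq> 0" "A' \<noteq> 0" "D' \<noteq> 0" "j \<noteq> 0"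
  shows "(Fn/(K*M) * (sn/((sk*(j*G))*(sm*A')))) * (Fn/(K*M) * (sn/((sk*(j*G))*(sm*A')))) * (F2k/(K*K) * ((2*j*H)/((sk*(j*G))*(sk*(j*G))))) * (F2m1/(M*M) * ((-D')/((sm*A')*(sm*A'))))
 + (Fn/(K*M) * (sn/((sk*A')*(sm*(j*G))))) * (Fn/(K*M) * (sn/((sk*A')*(sm*(j*G))))) * (F2k1/(K*K)*((-D')/((sk*A')*(sk*A')))) * (F2m/(M*M) * ((2*j*H)/((sm*(j*G))*(sm*(j*G)))))
 = -(Fn^2 * (F2k * F2m1 + F2k1 * F2m)/(K^4 * M^4)) * (2 * (D' * H) / (j^3 * (A' * G)^4))"
  using abstract_id[OF assms] by (simp add: power2_eq_square)

lemma binom_fact_rat: "k \<le> n \<Longrightarrow> (fact n :: rat) = of_nat (n choose k) * fact k * fact (n - k)"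
  using binomial_fact[of k n, where 'a=rat] by (simp add: field_simps)

lemma ring_aux:
  fixes C K M C2k C2m k m :: rat
  assumes "K \<noteq> 0" "M \<noteq> 0"
  shows "(C*K*((m+1)*M))^2 * ((C2k*K*K)*((2*m+1)*(C2m*M*M)) + ((2*k+1)*(C2k*K*K))*(C2m*M*M)) / (K^4*M^4)
     = 2*((k+m+1)*(m+1)^2*C^2*C2k*C2m)"
proof -
  have "(C*K*((m+1)*M))^2 * ((C2k*K*K)*((2*m+1)*(C2m*M*M)) + ((2*k+1)*(C2k*K*K))*(C2m*M*M))
      = (2*((k+m+1)*(m+1)^2*C^2*C2k*C2m)) * (K^4*M^4)"
    by (simp add: algebra_simps power2_eq_square power4_eq_xxxx)
  then show ?thesis using assms by (simp add: divide_eq_eq)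
qed

lemma fact_id:
  fixes k m' n :: nat
  assumes n: "n = k + Suc m'"
  shows "(fact n)^2 * (fact (2*k) * fact (2*m'+1) + fact (2*k+1) * fact (2*m')) / ((fact k)^4 * (fact m')^4)
     = (2::rat) * (of_nat n * of_nat (Suc m')^2 * of_nat (n choose k)^2 * of_nat ((2*k) choose k) * of_nat ((2*m') choose m'))"
proof -
  have e1: "(fact n :: rat) = of_nat (n choose k) * fact k * (of_nat (Suc m') * fact m')"
    using binom_fact_rat[of k n] n by simp
  have e2: "(fact (2*k) :: rat) = of_nat ((2*k) choose k) * fact k * fact k"
    using binom_fact_rat[of k "2*k"] by simp
  have e3: "(fact (2*k+1) :: rat) = of_nat (2*k+1) * fact (2*k)" by simp
  have e4: "(fact (2*m') :: rat) = of_nat ((2*m') choose m') * fact m' * fact m'"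
    using binom_fact_rat[of m' "2*m'"] by simp
  have e5: "(fact (2*m'+1) :: rat) = of_nat (2*m'+1) * fact (2*m')" by simp
  have hn: "(of_nat n :: rat) = of_nat k + of_nat m' + 1" using n by simp
  let ?C = "of_nat (n choose k) :: rat" and ?K = "fact k :: rat" and ?M = "fact m' :: rat"
    and ?C2k = "of_nat ((2*k) choose k) :: rat" and ?C2m = "of_nat ((2*m') choose m') :: rat"
  have "(fact n)^2 * (fact (2*k) * fact (2*m'+1) + fact (2*k+1) * fact (2*m')) / ((fact k)^4 * (fact m')^4)
     = (?C*?K*((of_nat m'+1)*?M))^2 * ((?C2k*?K*?K)*((2*of_nat m'+1)*(?C2m*?M*?M)) + ((2*of_nat k+1)*(?C2k*?K*?K))*(?C2m*?M*?M)) / (?K^4*?M^4)"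
    apply (simp only: e3 e5)
    by (simp add: e1 e2 e4 add_ac del: fact_Suc)
  also have "\<dots> = 2*((of_nat k+of_nat m'+1)*(of_nat m'+1)^2*?C^2*?C2k*?C2m)"
    by (rule ring_aux) auto
  also have "\<dots> = (2::rat) * (of_nat n * of_nat (Suc m')^2 * of_nat (n choose k)^2 * of_nat ((2*k) choose k) * of_nat ((2*m') choose m'))"
    by (simp add: hn)
  finally show ?thesis .
qed

definition Tt :: "nat \<Rightarrow> nat \<Rightarrow> nat \<Rightarrow> nat \<Rightarrow> nat" where
  "Tt p n k j = ((n * p) choose (k * p + j))^2 * ((2 * k * p + 2 * j) choose (k * p + j))
        * ((2 * n * p - 2 * k * p - 2 * j) choose (n * p - k * p - j))"

definition NNr :: "nat \<Rightarrow> nat \<Rightarrow> rat" where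
  "NNr n k = of_nat n * of_nat (n - k) ^ 2 * of_nat (n choose k) ^ 2 * of_nat ((2 * k) choose k)
        * of_nat ((2 * n - 2 * k - 2) choose (n - k - 1))"


context
  fixes p :: nat
  assumes pp: "prime p"
begin

lemma rep_pint:
  assumes "qb + qc \<le> qa" "ra < p" "rb < p" "rc < p"
  shows "pint p ((fact qa / (fact qb * fact qc)) * (rho qa ra / (rho qb rb * rho qc rc)))"
proof -
  have "punit p (rho qa ra / (rho qb rb * rho qc rc))"
    using assms by (intro punit_divide[OF pp] punit_mult[OF pp] punit_rho[OF pp])
  then show ?thesis
    using assms by (intro pint_mult[OF pp] fact_quot_pint[OF pp] punit_pint[OF pp]) auto
qed

lemma cg_power: "cg p k x y \<Longrightarrow> pint p y \<Longrightarrow> cg p k (x ^ n) (y ^ n)"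
  by (induction n) (auto intro: cg_mult2[OF pp] pint_power[OF pp] simp: pp)

lemma inv_cube_cg:
  assumes "1 \<le> j" "j < p" and that: "p \<ge> 5"
  shows "cg p 1 (1 / of_nat j ^ 3) (of_nat j ^ (p - 4))"
proof -
  have nd: "\<not> p dvd j" using assms by (auto dest: dvd_imp_le)
  have "[j ^ (p - 1) = 1] (mod p)" using fermat_theorem[OF pp nd] .
  then have "[int j ^ (p - 1) = 1] (mod int (p ^ 1))" by (metis cong_int_iff of_nat_1 of_nat_power power_one_right)
  then have c: "cg p 1 (of_int (int j ^ (p - 1))) (of_int 1)" by (rule cg_int[OF pp])
  have u: "punit p (of_nat j ^ 3)" using punit_power[OF pp punit_nat[OF pp nd]] .
  have "cg p 1 (1 / of_nat j ^ 3 * 1) (1 / of_nat j ^ 3 * of_nat j ^ (p - 1))"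
    by (rule cg_mult_left[OF pp cg_sym[OF pp]]) (use c punit_inv_pint[OF pp u] in auto)
  moreover have "(of_nat j ^ (p - 1) :: rat) = of_nat j ^ (p - 4) * of_nat j ^ 3"
    using that by (simp add: power_add[symmetric])
  moreover have "of_nat j \<noteq> (0::rat)" using assms by simp
  ultimately show ?thesis by simp
qed

end

context
  fixes p h n k :: nat
  assumes pp: "prime p" and p5: "p \<ge> 5" and ph: "p = 2 * h + 1" and kn: "k < n"
begin

lemma pair_cg:
  assumes j: "1 \<le> j" "j \<le> h"
  shows "cg p 4 (of_nat (Tt p n k j) + of_nat (Tt p n k (p - j)))
           (of_nat p ^ 3 * (- 4 * NNr n k * of_nat j ^ (p - 4)))"
proof -
  define m' where "m' = n - k - 1"
  have n: "n = k + Suc m'" using kn unfolding m'_def by simp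
  have p0: "p > 0" using p5 by simp
  have jp: "2 * j < p" "j < p" using j ph by auto
  have npx: "n * p = k * p + m' * p + p" unfolding n by (simp add: algebra_simps)
  note bcf = binom_cg_full[OF pp]
  have F1: "cg p 1 (of_nat ((n * p) choose (k * p + j)) / of_nat p ^ 1) ((fact n / (fact k * fact m')) * (rho n 0 / (rho k j * rho m' (p - j))))"
    by (rule bcf(1); use npx jp j n in \<open>simp add: algebra_simps\<close>; arith)
  have F1p: "pint p ((fact n / (fact k * fact m')) * (rho n 0 / (rho k j * rho m' (p - j))))"
    by (rule rep_pint[OF pp]) (use jp j n in auto)
  have G1: "cg p 1 (of_nat ((n * p) choose (k * p + (p - j))) / of_nat p ^ 1) ((fact n / (fact k * fact m')) * (rho n 0 / (rho k (p - j) * rho m' j)))"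
    by (rule bcf(1); use npx jp j n in \<open>simp add: algebra_simps\<close>; arith)
  have G1p: "pint p ((fact n / (fact k * fact m')) * (rho n 0 / (rho k (p - j) * rho m' j)))"
    by (rule rep_pint[OF pp]) (use jp j n in auto)
  have F2: "cg p 1 (of_nat ((2 * k * p + 2 * j) choose (k * p + j)) / of_nat p ^ 0) ((fact (2 * k) / (fact k * fact k)) * (rho (2 * k) (2 * j) / (rho k j * rho k j)))"
    by (rule bcf(1); use npx jp j n in \<open>simp add: algebra_simps\<close>; arith)
  have F2p: "pint p ((fact (2 * k) / (fact k * fact k)) * (rho (2 * k) (2 * j) / (rho k j * rho k j)))"
    by (rule rep_pint[OF pp]) (use jp j n in auto)
  have G2: "cg p 1 (of_nat ((2 * k * p + 2 * (p - j)) choose (k * p + (p - j))) / of_nat p ^ 1) ((fact (2 * k + 1) / (fact k * fact k)) * (rho (2 * k + 1) (p - 2 * j) / (rho k (p - j) * rho k (p - j))))"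
    by (rule bcf(1); use npx jp j n in \<open>simp add: algebra_simps\<close>; arith)
  have G2p: "pint p ((fact (2 * k + 1) / (fact k * fact k)) * (rho (2 * k + 1) (p - 2 * j) / (rho k (p - j) * rho k (p - j))))"
    by (rule rep_pint[OF pp]) (use jp j n in auto)
  have F3: "cg p 1 (of_nat ((2 * n * p - 2 * k * p - 2 * j) choose (n * p - k * p - j)) / of_nat p ^ 1) ((fact (2 * m' + 1) / (fact m' * fact m')) * (rho (2 * m' + 1) (p - 2 * j) / (rho m' (p - j) * rho m' (p - j))))"
    by (rule bcf(1); use npx jp j n in \<open>simp add: algebra_simps\<close>; arith)
  have F3p: "pint p ((fact (2 * m' + 1) / (fact m' * fact m')) * (rho (2 * m' + 1) (p - 2 * j) / (rho m' (p - j) * rho m' (p - j))))"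
    by (rule rep_pint[OF pp]) (use jp j n in auto)
  have G3: "cg p 1 (of_nat ((2 * n * p - 2 * k * p - 2 * (p - j)) choose (n * p - k * p - (p - j))) / of_nat p ^ 0) ((fact (2 * m') / (fact m' * fact m')) * (rho (2 * m') (2 * j) / (rho m' j * rho m' j)))"
    by (rule bcf(1); use npx jp j n in \<open>simp add: algebra_simps\<close>; arith)
  have G3p: "pint p ((fact (2 * m') / (fact m' * fact m')) * (rho (2 * m') (2 * j) / (rho m' j * rho m' j)))"
    by (rule rep_pint[OF pp]) (use jp j n in auto)
  let ?R1 = "(fact n / (fact k * fact m')) * (rho n 0 / (rho k j * rho m' (p - j)))"
  let ?S1 = "(fact n / (fact k * fact m')) * (rho n 0 / (rho k (p - j) * rho m' j))"
  let ?R2 = "(fact (2 * k) / (fact k * fact k)) * (rho (2 * k) (2 * j) / (rho k j * rho k j))"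
  let ?S2 = "(fact (2 * k + 1) / (fact k * fact k)) * (rho (2 * k + 1) (p - 2 * j) / (rho k (p - j) * rho k (p - j)))"
  let ?R3 = "(fact (2 * m' + 1) / (fact m' * fact m')) * (rho (2 * m' + 1) (p - 2 * j) / (rho m' (p - j) * rho m' (p - j)))"
  let ?S3 = "(fact (2 * m') / (fact m' * fact m')) * (rho (2 * m') (2 * j) / (rho m' j * rho m' j))"
  let ?X1 = "of_nat ((n * p) choose (k * p + j)) / of_nat p ^ 1 :: rat"
  let ?Y1 = "of_nat ((n * p) choose (k * p + (p - j))) / of_nat p ^ 1 :: rat"
  let ?X2 = "of_nat ((2 * k * p + 2 * j) choose (k * p + j)) / of_nat p ^ 0 :: rat"
  let ?Y2 = "of_nat ((2 * k * p + 2 * (p - j)) choose (k * p + (p - j))) / of_nat p ^ 1 :: rat"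
  let ?X3 = "of_nat ((2 * n * p - 2 * k * p - 2 * j) choose (n * p - k * p - j)) / of_nat p ^ 1 :: rat"
  let ?Y3 = "of_nat ((2 * n * p - 2 * k * p - 2 * (p - j)) choose (n * p - k * p - (p - j))) / of_nat p ^ 0 :: rat"
  have eqT: "of_nat (Tt p n k j) = of_nat p ^ 3 * (?X1 * ?X1 * ?X2 * ?X3)"
    using p0 by (simp add: Tt_def field_simps power2_eq_square power3_eq_cube)
  have eqT': "of_nat (Tt p n k (p - j)) = of_nat p ^ 3 * (?Y1 * ?Y1 * ?Y2 * ?Y3)"
    using p0 by (simp add: Tt_def field_simps power2_eq_square power3_eq_cube)
  have cX: "cg p 1 (?X1 * ?X1 * ?X2 * ?X3) (?R1 * ?R1 * ?R2 * ?R3)"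
    by (intro cg_mult2[OF pp] F1 F2 F3 F1p F2p F3p pint_mult[OF pp])
  have cY: "cg p 1 (?Y1 * ?Y1 * ?Y2 * ?Y3) (?S1 * ?S1 * ?S2 * ?S3)"
    by (intro cg_mult2[OF pp] G1 G2 G3 G1p G2p G3p pint_mult[OF pp])
  have c4: "cg p 4 (of_nat (Tt p n k j) + of_nat (Tt p n k (p - j)))
      (of_nat p ^ 3 * (?R1 * ?R1 * ?R2 * ?R3 + ?S1 * ?S1 * ?S2 * ?S3))"
  proof -
    have "cg p (1 + 3) (of_nat p ^ 3 * (?X1 * ?X1 * ?X2 * ?X3) + of_nat p ^ 3 * (?Y1 * ?Y1 * ?Y2 * ?Y3))
       (of_nat p ^ 3 * (?R1 * ?R1 * ?R2 * ?R3) + of_nat p ^ 3 * (?S1 * ?S1 * ?S2 * ?S3))"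
      by (intro cg_add[OF pp] cg_scale[OF pp] cX cY)
    then show ?thesis unfolding eqT eqT' by (simp add: distrib_left)
  qed
  define sk where "sk = (-1::rat) ^ k"
  define sm where "sm = (-1::rat) ^ m'"
  define sn where "sn = (-1::rat) ^ n"
  define G where "G = (fact (j - 1) :: rat)"
  define H where "H = (fact (2 * j - 1) :: rat)"
  define A' where "A' = (fact (p - j) :: rat)"
  define D' where "D' = (fact (p - 2 * j) :: rat)"
  have fj: "(fact j :: rat) = of_nat j * G" unfolding G_def using j by (simp add: fact_reduce)
  have f2j: "(fact (2 * j) :: rat) = 2 * of_nat j * H" unfolding H_def using j by (subst fact_reduce) auto
  have r1: "rho n 0 = sn" unfolding rho_def[OF pp] sn_def by simp
  have r2: "rho k j = sk * (of_nat j * G)" unfolding rho_def[OF pp] sk_def fj ..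
  have r3: "rho m' (p - j) = sm * A'" unfolding rho_def[OF pp] sm_def A'_def ..
  have r4: "rho (2 * k) (2 * j) = 2 * of_nat j * H" unfolding rho_def[OF pp] f2j by simp
  have r5: "rho (2 * m' + 1) (p - 2 * j) = - D'" unfolding rho_def[OF pp] D'_def by simp
  have r6: "rho (2 * k + 1) (p - 2 * j) = - D'" unfolding rho_def[OF pp] D'_def by simp
  have r7: "rho k (p - j) = sk * A'" unfolding rho_def[OF pp] sk_def A'_def ..
  have r8: "rho m' j = sm * (of_nat j * G)" unfolding rho_def[OF pp] sm_def fj ..
  have r9: "rho (2 * m') (2 * j) = 2 * of_nat j * H" unfolding rho_def[OF pp] f2j by simp
  have nz: "sk^2 = 1" "sm^2 = 1" "sn^2 = 1" "(fact k :: rat) \<noteq> 0" "(fact m' :: rat) \<noteq> 0" "G \<noteq> 0" "H \<noteq> 0"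
    "A' \<noteq> 0" "D' \<noteq> 0" "(of_nat j :: rat) \<noteq> 0"
    unfolding sk_def sm_def sn_def G_def H_def A'_def D'_def using j
    by (simp_all add: power_mult[symmetric] mult.commute[of _ 2])
  have NN: "NNr n k = of_nat n * of_nat (Suc m')^2 * of_nat (n choose k)^2 * of_nat ((2*k) choose k) * of_nat ((2*m') choose m')"
  proof -
    have "n - k = Suc m'" "2 * n - 2 * k - 2 = 2 * m'" "n - k - 1 = m'" using n by auto
    then show ?thesis unfolding NNr_def by simp
  qed
  define Xq where "Xq = 2 * (D' * H) / (of_nat j ^ 3 * (A' * G) ^ 4)"
  have ident: "?R1 * ?R1 * ?R2 * ?R3 + ?S1 * ?S1 * ?S2 * ?S3 = - (2 * NNr n k) * Xq"
    unfolding r1 r2 r3 r4 r5 r6 r7 r8 r9 abstract_id2[OF nz] fact_id[OF n] NN Xq_def by simp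
  have cu: "cg p 1 (A' * G) ((-1) ^ j)"
  proof -
    have "[fact (p - j) * fact (j - 1) = ((-1) ^ j :: int)] (mod int (p ^ 1))"
      using fact_pair_cong[OF pp, of j] j jp by simp
    from cg_int[OF pp this] show ?thesis unfolding A'_def G_def by simp
  qed
  have cu4: "cg p 1 ((A' * G) ^ 4) 1"
  proof -
    have "pint p ((-1::rat)^j)" using pint_power[OF pp pint_int[OF pp, of "-1"]] by simp
    then show ?thesis using cg_power[OF pp cu, of 4] by (simp add: power_mult[symmetric])
  qed
  have cv: "cg p 1 (D' * H) 1"
  proof -
    have "[fact (p - 2 * j) * fact (2 * j - 1) = ((-1) ^ (2 * j) :: int)] (mod int (p ^ 1))"
      using fact_pair_cong[OF pp, of "2 * j"] j jp by simp
    from cg_int[OF pp this] show ?thesis unfolding D'_def H_def by simp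
  qed
  have ndj: "\<not> p dvd j" using j jp by (auto dest: dvd_imp_le)
  have uj: "punit p (of_nat j ^ 3)" using punit_power[OF pp punit_nat[OF pp ndj]] .
  have uAG: "punit p ((A' * G) ^ 4)" unfolding A'_def G_def
    using jp j by (intro punit_power[OF pp] punit_mult[OF pp] punit_fact[OF pp]) auto
  have cden: "cg p 1 (of_nat j ^ 3 * (A' * G) ^ 4) (of_nat j ^ 3 * 1)"
    by (rule cg_mult_left[OF pp cu4]) (use uj punit_pint[OF pp] in auto)
  have cinv: "cg p 1 (1 / (of_nat j ^ 3 * (A' * G) ^ 4)) (1 / (of_nat j ^ 3 * 1))"
    by (rule cg_inverse[OF pp cden]) (use uj uAG punit_mult[OF pp] in auto)
  have cic: "cg p 1 (1 / of_nat j ^ 3) (of_nat j ^ (p - 4))"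
    by (rule inv_cube_cg[OF pp]) (use j jp p5 in auto)
  have cinv2: "cg p 1 (1 / (of_nat j ^ 3 * (A' * G) ^ 4)) (of_nat j ^ (p - 4))"
    using cg_trans[OF pp cinv] cic by simp
  have cX: "cg p 1 Xq (2 * of_nat j ^ (p - 4))"
  proof -
    have "cg p 1 (2 * (D' * H) * (1 / (of_nat j ^ 3 * (A' * G) ^ 4))) (2 * 1 * of_nat j ^ (p - 4))"
      by (intro cg_mult2[OF pp] cg_mult_left[OF pp] cv cinv2) (auto simp: pp)
    then show ?thesis unfolding Xq_def by simp
  qed
  have pNN: "pint p (NNr n k)" unfolding NNr_def using pp by (intro pint_mult[OF pp] pint_power[OF pp]) auto
  have cF: "cg p (1 + 3) (of_nat p ^ 3 * (- (2 * NNr n k) * Xq)) (of_nat p ^ 3 * (- (2 * NNr n k) * (2 * of_nat j ^ (p - 4))))"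
    by (intro cg_scale[OF pp] cg_mult_left[OF pp] cX pint_uminus[OF pp] pint_mult[OF pp] pNN) (simp add: pp)
  show ?thesis using cg_trans[OF pp c4[unfolded ident]] cF by (simp add: algebra_simps)
qed
end

theorem mainTheorem6:
  fixes p n k :: nat
  assumes "prime p" and "p \<ge> 5" and "n > k"
  shows "rat_cong
    (of_nat (\<Sum>j = 1..p - 1. ((n * p) choose (k * p + j))^2
        * ((2 * k * p + 2 * j) choose (k * p + j))
        * ((2 * n * p - 2 * k * p - 2 * j) choose (n * p - k * p - j))))
    (8 * of_nat p ^ 3 * bernoulli (p - 3) * of_nat n * of_nat (n - k) ^ 2
        * of_nat (n choose k) ^ 2 * of_nat ((2 * k) choose k)
        * of_nat ((2 * n - 2 * k - 2) choose (n - k - 1)))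
    p 4"
proof -
  note pp = assms(1) and p5 = assms(2) and kn = assms(3)
  have "odd p" using prime_odd_nat[OF pp] p5 by simp
  then obtain h where ph: "p = 2 * h + 1" by (metis oddE)
  have pm1: "p - 1 = 2 * h" using ph by simp
  let ?f = "\<lambda>j. (of_nat (Tt p n k j) :: rat)"
  have L: "(of_nat (\<Sum>j = 1..p - 1. ((n * p) choose (k * p + j))^2
        * ((2 * k * p + 2 * j) choose (k * p + j))
        * ((2 * n * p - 2 * k * p - 2 * j) choose (n * p - k * p - j))) :: rat)
      = (\<Sum>j\<in>{1..h}. ?f j + ?f (p - j))"
  proof -
    have "(of_nat (\<Sum>j = 1..p - 1. ((n * p) choose (k * p + j))^2
        * ((2 * k * p + 2 * j) choose (k * p + j))
        * ((2 * n * p - 2 * k * p - 2 * j) choose (n * p - k * p - j))) :: rat)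
        = (\<Sum>j\<in>{1..2*h}. ?f j)" unfolding pm1 Tt_def by simp
    also have "\<dots> = (\<Sum>j\<in>{1..h}. ?f j + ?f (p - j))" by (rule sum_split1[OF ph])
    finally show ?thesis .
  qed
  have c1: "cg p 4 (\<Sum>j\<in>{1..h}. ?f j + ?f (p - j))
       (\<Sum>j\<in>{1..h}. of_nat p ^ 3 * (- 4 * NNr n k * of_nat j ^ (p - 4)))"
    by (rule cg_sum[OF pp]) (rule pair_cg[OF pp p5 ph kn]; simp)
  have H3v: "H3 p h = (\<Sum>j\<in>{1..h}. int j ^ (p - 4))"
    using H3_val[OF pp p5 ph] e3_val[OF pp p5 ph] by simp
  have s1: "(\<Sum>j\<in>{1..h}. of_nat p ^ 3 * (- 4 * NNr n k * of_nat j ^ (p - 4)))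
      = of_nat p ^ 3 * ((- 4 * of_int (H3 p h)) * NNr n k)"
    unfolding H3v by (simp add: sum_distrib_left sum_distrib_right algebra_simps)
  have pNN: "pint p (NNr n k)" unfolding NNr_def using pp by (intro pint_mult[OF pp] pint_power[OF pp]) auto
  have c2: "cg p (1 + 3) (of_nat p ^ 3 * ((- 4 * of_int (H3 p h)) * NNr n k))
      (of_nat p ^ 3 * ((8 * bernoulli (p - 3)) * NNr n k))"
  proof -
    have pH: "pint p (- 4 * of_int (H3 p h))" using pp by (intro pint_mult[OF pp]) auto
    have "cg p 1 ((- 4 * of_int (H3 p h)) * NNr n k) ((8 * bernoulli (p - 3)) * NNr n k)"
      by (rule cg_mult[OF pp cg_sym[OF pp bern_H3[OF pp p5 ph]] cg_refl[OF pp] pH pNN])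
    then show ?thesis by (rule cg_scale[OF pp])
  qed

  have R: "8 * of_nat p ^ 3 * bernoulli (p - 3) * of_nat n * of_nat (n - k) ^ 2
        * of_nat (n choose k) ^ 2 * of_nat ((2 * k) choose k)
        * of_nat ((2 * n - 2 * k - 2) choose (n - k - 1))
      = of_nat p ^ 3 * ((8 * bernoulli (p - 3)) * NNr n k)"
    unfolding NNr_def by (simp add: algebra_simps)
  have "cg p 4 (of_nat (\<Sum>j = 1..p - 1. ((n * p) choose (k * p + j))^2
        * ((2 * k * p + 2 * j) choose (k * p + j))
        * ((2 * n * p - 2 * k * p - 2 * j) choose (n * p - k * p - j))))
    (8 * of_nat p ^ 3 * bernoulli (p - 3) * of_nat n * of_nat (n - k) ^ 2
        * of_nat (n choose k) ^ 2 * of_nat ((2 * k) choose k)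
        * of_nat ((2 * n - 2 * k - 2) choose (n - k - 1)))"
    unfolding L R using cg_trans[OF pp c1[unfolded s1]] c2 by simp
  then show ?thesis using rat_cong_iff[OF pp] by simp
qed

end
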